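(* (1) If $L\subseteq A^*$ is accepted by a nondeterministic finite automaton having depth $m$, then ${\downarrow}L$ and ${\downarrow}_<L$ are $\ell$-PT for $\ell=2m+2$. (2) The same holds if $L$ is accepted by a context-free grammar in quadratic normal form with $N$ nonterminals, with $\ell=4\cdot 3^{N-1}+2$.
   Context: The depth of an automaton is the maximum length of a simple (non-repeating) path from an initial state to some final state. A context-free grammar is in quadratic normal form if every production has one of the forms $X\to YZ$, $X\to Y$, $X\to a$ or $X\to\epsilon$, where $X,Y,Z$ are nonterminals and $a$ is a terminal letter. $u\sqsubseteq v$ (subword) means $u=a_1\cdots a_n$ with letters $a_i$ and $v=v_0a_1v_1\cdots a_nv_n$; $u\sqsubset v$ means $u\sqsubseteq v$ and $u\ne v$. ${\downarrow}L=\{v~|~\exists u\in L: v\sqsubseteq u\}$, ${\downarrow}_<L=\{v~|~\exists u\in L: v\sqsubset u\}$. $u\sim_n v$ iff $u,v$ have the same subwords of length at most $n$; $L$ is $n$-PT if it is a union of $\sim_n$-classes. *)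

theory Defs
  imports Main "HOL-Library.Sublist"
begin

text \<open>Subword order: u is a (scattered) subword of v is the library's subseq u v;
  strict subword is strict_subseq.\<close>

definition down :: "'a list set \<Rightarrow> 'a list set" where
  "down L = {v. \<exists>u\<in>L. subseq v u}"

definition down_strict :: "'a list set \<Rightarrow> 'a list set" where
  "down_strict L = {v. \<exists>u\<in>L. strict_subseq v u}"

definition sim_n :: "nat \<Rightarrow> 'a list \<Rightarrow> 'a list \<Rightarrow> bool" where
  "sim_n n u v \<longleftrightarrow> (\<forall>w. length w \<le> n \<longrightarrow> (subseq w u \<longleftrightarrow> subseq w v))"

text \<open>L is n-PT iff it is a union of \<sim>n-classes, i.e. closed under \<sim>n.\<close>
definition is_PT :: "nat \<Rightarrow> 'a list set \<Rightarrow> bool" where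
  "is_PT n L \<longleftrightarrow> (\<forall>u v. sim_n n u v \<longrightarrow> (u \<in> L \<longleftrightarrow> v \<in> L))"

record ('s, 'a) nfa =
  states :: "'s set"
  init :: "'s set"
  final :: "'s set"
  trans :: "('s \<times> 'a \<times> 's) set"

definition wf_nfa :: "('s, 'a) nfa \<Rightarrow> bool" where
  "wf_nfa M \<longleftrightarrow> finite (states M) \<and> init M \<subseteq> states M \<and> final M \<subseteq> states M
     \<and> trans M \<subseteq> states M \<times> UNIV \<times> states M"

definition nfa_lang :: "('s, 'a) nfa \<Rightarrow> 'a list set" where
  "nfa_lang M = {w. \<exists>qs. length qs = Suc (length w) \<and> hd qs \<in> init M \<and> last qs \<in> final M
       \<and> (\<forall>i < length w. (qs ! i, w ! i, qs ! Suc i) \<in> trans M)}"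

definition simple_path :: "('s, 'a) nfa \<Rightarrow> 's list \<Rightarrow> bool" where
  "simple_path M qs \<longleftrightarrow> qs \<noteq> [] \<and> distinct qs \<and> hd qs \<in> init M \<and> last qs \<in> final M
       \<and> (\<forall>i. Suc i < length qs \<longrightarrow> (\<exists>a. (qs ! i, a, qs ! Suc i) \<in> trans M))"

definition nfa_depth :: "('s, 'a) nfa \<Rightarrow> nat" where
  "nfa_depth M = Max {length qs - 1 | qs. simple_path M qs}"

datatype ('n, 'a) rhs = Bin 'n 'n | UnitR 'n | Tm 'a | Eps

record ('n, 'a) cfg =
  nts :: "'n set"
  start :: 'n
  prods :: "('n \<times> ('n, 'a) rhs) set"

definition rhs_nts :: "('n, 'a) rhs \<Rightarrow> 'n set" where
  "rhs_nts r = (case r of Bin Y Z \<Rightarrow> {Y, Z} | UnitR Y \<Rightarrow> {Y} | Tm a \<Rightarrow> {} | Eps \<Rightarrow> {})"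

definition wf_qnf :: "('n, 'a) cfg \<Rightarrow> bool" where
  "wf_qnf G \<longleftrightarrow> finite (nts G) \<and> start G \<in> nts G \<and> finite (prods G)
     \<and> (\<forall>(X, r) \<in> prods G. X \<in> nts G \<and> rhs_nts r \<subseteq> nts G)"

inductive derives :: "('n \<times> ('n, 'a) rhs) set \<Rightarrow> 'n \<Rightarrow> 'a list \<Rightarrow> bool" for P where
  bin: "(X, Bin Y Z) \<in> P \<Longrightarrow> derives P Y u \<Longrightarrow> derives P Z v \<Longrightarrow> derives P X (u @ v)"
| un: "(X, UnitR Y) \<in> P \<Longrightarrow> derives P Y u \<Longrightarrow> derives P X u"
| tm: "(X, Tm a) \<in> P \<Longrightarrow> derives P X [a]"
| eps: "(X, Eps) \<in> P \<Longrightarrow> derives P X []"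

definition cfg_lang :: "('n, 'a) cfg \<Rightarrow> 'a list set" where
  "cfg_lang G = {w. derives (prods G) (start G) w}"

end

theory Submission
  imports Defs "HOL-Library.Transitive_Closure_Table"
begin

lemma strict_subseq_iff: "strict_subseq v u \<longleftrightarrow> subseq v u \<and> length v < length u"
  unfolding strict_subseq_def
  by (metis list_emb_length nat_less_le subseq_same_length)

definition conc :: "'a list set \<Rightarrow> 'a list set \<Rightarrow> 'a list set" where
  "conc A B = {x @ y | x y. x \<in> A \<and> y \<in> B}"

lemma conc_assoc: "conc (conc A B) C = conc A (conc B C)"
  unfolding conc_def by (auto, metis append.assoc, metis append.assoc)

lemma conc_eps: "conc {[]} B = B" "conc B {[]} = B"
  unfolding conc_def by auto

lemma conc_empty: "conc {} B = {}" "conc B {} = {}"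
  unfolding conc_def by auto

lemma conc_UN1: "conc (\<Union>i\<in>S. A i) B = (\<Union>i\<in>S. conc (A i) B)"
  unfolding conc_def by auto

lemma conc_UN2: "conc B (\<Union>i\<in>S. A i) = (\<Union>i\<in>S. conc B (A i))"
  unfolding conc_def by auto

lemma conc_Un1: "conc (A \<union> A') B = conc A B \<union> conc A' B"
  unfolding conc_def by auto

lemma subseq_set: "subseq v u \<Longrightarrow> set v \<subseteq> set u"
  by (induction rule: list_emb.induct) auto

datatype 'a atom = Star "'a set" | Opt 'a

fun ilang :: "'a atom list \<Rightarrow> 'a list set" where
  "ilang [] = {[]}"
| "ilang (Star G # e) = conc (lists G) (ilang e)"
| "ilang (Opt a # e) = conc {[], [a]} (ilang e)"

lemma ilang_append: "ilang (e1 @ e2) = conc (ilang e1) (ilang e2)"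
  by (induction e1 rule: ilang.induct) (auto simp: conc_eps conc_assoc)

definition dc :: "'a list set \<Rightarrow> bool" where
  "dc D \<longleftrightarrow> (\<forall>u v. u \<in> D \<longrightarrow> subseq v u \<longrightarrow> v \<in> D)"

definition wit :: "nat \<Rightarrow> 'a list set \<Rightarrow> bool" where
  "wit n D \<longleftrightarrow> (\<forall>v. v \<notin> D \<longrightarrow> (\<exists>w. subseq w v \<and> length w \<le> n \<and> w \<notin> D))"

lemma dc_empty: "dc D \<Longrightarrow> [] \<notin> D \<Longrightarrow> D = {}"
  unfolding dc_def by (metis empty_iff list_emb_Nil subsetI subset_antisym)

lemma dc_ilang: "dc (ilang e)"
proof (induction e rule: ilang.induct)
  case 1
  then show ?case by (auto simp: dc_def)
next
  case (2 G e)
  show ?case unfolding dc_def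
  proof (intro allI impI)
    fix u v assume "u \<in> ilang (Star G # e)" "subseq v u"
    then obtain x y where u: "u = x @ y" "x \<in> lists G" "y \<in> ilang e" by (auto simp: conc_def)
    then obtain v1 v2 where "v = v1 @ v2" "subseq v1 x" "subseq v2 y"
      using \<open>subseq v u\<close> by (auto elim: subseq_appendE)
    moreover have "v1 \<in> lists G" using subseq_set[OF \<open>subseq v1 x\<close>] u(2) by auto
    moreover have "v2 \<in> ilang e" using 2 \<open>subseq v2 y\<close> u(3) by (auto simp: dc_def)
    ultimately show "v \<in> ilang (Star G # e)" by (auto simp: conc_def)
  qed
next
  case (3 a e)
  show ?case unfolding dc_def
  proof (intro allI impI)
    fix u v assume "u \<in> ilang (Opt a # e)" "subseq v u"
    then obtain x y where u: "u = x @ y" "x \<in> {[], [a]}" "y \<in> ilang e" by (auto simp: conc_def)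
    then obtain v1 v2 where "v = v1 @ v2" "subseq v1 x" "subseq v2 y"
      using \<open>subseq v u\<close> by (auto elim: subseq_appendE)
    moreover have "v1 \<in> {[], [a]}" using \<open>subseq v1 x\<close> u(2)
      by (auto simp: subseq_singleton_left) (metis list.exhaust list_emb_Cons_Nil list_emb_Nil2 subseq_Cons2_iff)
    moreover have "v2 \<in> ilang e" using 3 \<open>subseq v2 y\<close> u(3) by (auto simp: dc_def)
    ultimately show "v \<in> ilang (Opt a # e)" by (auto simp: conc_def)
  qed
qed

lemma conc_opt: "conc {[], [a]} T = T \<union> (Cons a) ` T"
proof (intro equalityI subsetI)
  fix x assume "x \<in> conc {[], [a]} T"
  then obtain y z where "x = y @ z" "y = [] \<or> y = [a]" "z \<in> T" unfolding conc_def by blast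
  then show "x \<in> T \<union> (Cons a) ` T" by auto
next
  fix x assume "x \<in> T \<union> (Cons a) ` T"
  then show "x \<in> conc {[], [a]} T"
  proof
    assume "x \<in> T" moreover have "x = [] @ x" by simp
    ultimately show ?thesis unfolding conc_def by blast
  next
    assume "x \<in> (Cons a) ` T" then obtain z where "x = [a] @ z" "z \<in> T" by auto
    then show ?thesis unfolding conc_def by blast
  qed
qed

lemma wit_cons_aux:
  assumes "dc T" "wit n T" "x # v' \<notin> T"
  shows "\<exists>u. subseq u v' \<and> length u \<le> n \<and> x # u \<notin> T"
proof -
  obtain w where w: "subseq w (x # v')" "length w \<le> n" "w \<notin> T"
    using assms unfolding wit_def by blast
  show ?thesis
  proof (cases "subseq w v'")
    case True
    have "subseq w (x # w)" by (rule list_emb_Cons) (rule subseq_order.order_refl)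
    then have "x # w \<notin> T" using w(3) assms(1) unfolding dc_def by blast
    then show ?thesis using True w(2) by blast
  next
    case False
    then obtain u where "w = x # u" "subseq u v'" using w(1)
      by (cases w) (auto split: if_splits)
    then show ?thesis using w by auto
  qed
qed

lemma wit_ilang: "wit (length e + 1) (ilang e)"
proof (induction e rule: ilang.induct)
  case 1
  show ?case unfolding wit_def
  proof (intro allI impI)
    fix v :: "'a list" assume "v \<notin> ilang []"
    then obtain x v' where "v = x # v'" by (cases v) auto
    then show "\<exists>w. subseq w v \<and> length w \<le> length [] + 1 \<and> w \<notin> ilang []"
      by (intro exI[of _ "[x]"]) auto
  qed
next
  case (2 G e)
  define T where "T = ilang e"
  have dcT: "dc T" using dc_ilang T_def by blast
  have witT: "wit (length e + 1) T" using 2 T_def by simp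
  show ?case unfolding wit_def
  proof (intro allI impI)
    fix v assume v: "v \<notin> ilang (Star G # e)"
    show "\<exists>w. subseq w v \<and> length w \<le> length (Star G # e) + 1 \<and> w \<notin> ilang (Star G # e)"
    proof (cases "v \<in> lists G")
      case True
      then have "[] \<notin> T" using v by (auto simp: conc_def T_def)
      then have "T = {}" using dcT dc_empty by blast
      then show ?thesis by (intro exI[of _ "[]"]) (auto simp: conc_def T_def)
    next
      case False
      then have "\<exists>x\<in>set v. x \<notin> G" by auto
      then obtain p x v' where pv: "v = p @ x # v'" "x \<notin> G" "\<forall>y\<in>set p. y \<in> G"
        using split_list_first_prop[of v "\<lambda>x. x \<notin> G"] by blast
      have "p \<in> lists G" using pv(3) by auto
      have "x # v' \<notin> T"
      proof
        assume "x # v' \<in> T"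
        then have "v \<in> conc (lists G) T" unfolding conc_def using pv(1) \<open>p \<in> lists G\<close> by blast
        then show False using v T_def by simp
      qed
      then obtain u where u: "subseq u v'" "length u \<le> length e + 1" "x # u \<notin> T"
        using wit_cons_aux[OF dcT witT] by blast
      have "x # u \<notin> ilang (Star G # e)"
      proof
        assume "x # u \<in> ilang (Star G # e)"
        then obtain s t where st: "x # u = s @ t" "s \<in> lists G" "t \<in> T"
          by (auto simp: conc_def T_def)
        then have "s = []" using pv(2) by (cases s) auto
        then show False using st u(3) by auto
      qed
      moreover have "subseq (x # u) v" using pv(1) u(1)
        by (simp add: list_emb_append2)
      ultimately show ?thesis using u(2) by (intro exI[of _ "x # u"]) auto
    qed
  qed
next
  case (3 a e)
  define T where "T = ilang e"
  have dcT: "dc T" using dc_ilang T_def by blast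
  have witT: "wit (length e + 1) T" using 3 T_def by simp
  have D: "ilang (Opt a # e) = T \<union> (Cons a) ` T" unfolding T_def by (simp add: conc_opt)
  show ?case unfolding wit_def D
  proof (intro allI impI)
    fix v assume v: "v \<notin> T \<union> (Cons a) ` T"
    show "\<exists>w. subseq w v \<and> length w \<le> length (Opt a # e) + 1 \<and> w \<notin> T \<union> (Cons a) ` T"
    proof (cases v)
      case Nil
      then have "T = {}" using v dcT dc_empty by blast
      then show ?thesis by (intro exI[of _ "[]"]) auto
    next
      case (Cons x v')
      show ?thesis
      proof (cases "x = a")
        case True
        then have "v' \<notin> T" using v Cons by auto
        then obtain w where w: "subseq w v'" "length w \<le> length e + 1" "w \<notin> T"
          using witT unfolding wit_def by blast
        have "subseq w (a # w)" by (rule list_emb_Cons) (rule subseq_order.order_refl)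
        then have "a # w \<notin> T" using w(3) dcT unfolding dc_def by blast
        then show ?thesis using w Cons True by (intro exI[of _ "a # w"]) auto
      next
        case False
        then have "x # v' \<notin> T" using v Cons by auto
        then obtain u where u: "subseq u v'" "length u \<le> length e + 1" "x # u \<notin> T"
          using wit_cons_aux[OF dcT witT] by blast
        then show ?thesis using False Cons by (intro exI[of _ "x # u"]) auto
      qed
    qed
  qed
qed

lemma wit_PT: fixes D :: "'a list set" shows "dc D \<Longrightarrow> wit n D \<Longrightarrow> is_PT n D"
  unfolding is_PT_def
proof (intro allI impI)
  fix u v :: "'a list" assume dc: "dc D" and w: "wit n D" and s: "sim_n n u v"
  have *: "x \<in> D" if "y \<in> D" "sim_n n y x" for x y
  proof (rule ccontr)
    assume "x \<notin> D"
    then obtain z where z: "subseq z x" "length z \<le> n" "z \<notin> D" using w unfolding wit_def by blast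
    then have "subseq z y" using that(2) unfolding sim_n_def by blast
    then show False using z(3) that(1) dc unfolding dc_def by blast
  qed
  have "sim_n n v u" using s unfolding sim_n_def by blast
  then show "u \<in> D \<longleftrightarrow> v \<in> D" using * s by blast
qed

lemma PT_mono: "is_PT n D \<Longrightarrow> n \<le> n' \<Longrightarrow> is_PT n' D"
  unfolding is_PT_def sim_n_def by (meson order_trans)

lemma PT_Union: "(\<And>D. D \<in> S \<Longrightarrow> is_PT n D) \<Longrightarrow> is_PT n (\<Union>S)"
  unfolding is_PT_def by blast

definition idl :: "nat \<Rightarrow> 'a list set \<Rightarrow> bool" where
  "idl n D \<longleftrightarrow> (\<exists>I. D = \<Union>(ilang ` I) \<and> (\<forall>e\<in>I. length e \<le> n))"

lemma idl_PT: "idl n D \<Longrightarrow> is_PT (n + 1) D"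
proof -
  assume "idl n D"
  then obtain I where I: "D = \<Union>(ilang ` I)" "\<forall>e\<in>I. length e \<le> n" unfolding idl_def by blast
  have "is_PT (n + 1) (ilang e)" if "e \<in> I" for e
  proof -
    have "is_PT (length e + 1) (ilang e)" by (rule wit_PT[OF dc_ilang wit_ilang])
    then show ?thesis using PT_mono I(2) that by fastforce
  qed
  then show ?thesis using I(1) PT_Union[of "ilang ` I"] by blast
qed

lemma idl_mono: "idl n D \<Longrightarrow> n \<le> n' \<Longrightarrow> idl n' D"
  unfolding idl_def by (blast intro: le_trans)

lemma idl_empty: "idl n {}"
  unfolding idl_def by (intro exI[of _ "{}"]) auto

lemma idl_eps: "idl n {[]}"
  unfolding idl_def by (intro exI[of _ "{[]}"]) auto

lemma idl_lists: "idl 1 (lists G)"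
  unfolding idl_def by (intro exI[of _ "{[Star G]}"]) (auto simp: conc_eps)

lemma idl_opt: "idl 1 {[], [a]}"
  unfolding idl_def by (intro exI[of _ "{[Opt a]}"]) (auto simp: conc_eps)

lemma idl_Un: "idl n A \<Longrightarrow> idl n B \<Longrightarrow> idl n (A \<union> B)"
  unfolding idl_def by (metis Un_iff image_Un Union_Un_distrib)

lemma idl_UN: "(\<And>i. i \<in> S \<Longrightarrow> idl n (D i)) \<Longrightarrow> idl n (\<Union>i\<in>S. D i)"
proof -
  assume "\<And>i. i \<in> S \<Longrightarrow> idl n (D i)"
  then have "\<forall>i\<in>S. \<exists>I. D i = \<Union>(ilang ` I) \<and> (\<forall>e\<in>I. length e \<le> n)" unfolding idl_def by blast
  then obtain f where f: "\<forall>i\<in>S. D i = \<Union>(ilang ` f i) \<and> (\<forall>e\<in>f i. length e \<le> n)"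
    by metis
  show ?thesis unfolding idl_def
    by (intro exI[of _ "\<Union>i\<in>S. f i"]) (use f in auto)
qed

lemma idl_conc: "idl n1 A \<Longrightarrow> idl n2 B \<Longrightarrow> idl (n1 + n2) (conc A B)"
proof -
  assume "idl n1 A" "idl n2 B"
  then obtain I1 I2 where I: "A = \<Union>(ilang ` I1)" "\<forall>e\<in>I1. length e \<le> n1"
     "B = \<Union>(ilang ` I2)" "\<forall>e\<in>I2. length e \<le> n2" unfolding idl_def by blast
  have "conc A B = \<Union>(ilang ` {e1 @ e2 | e1 e2. e1 \<in> I1 \<and> e2 \<in> I2})"
  proof (intro equalityI subsetI)
    fix x assume "x \<in> conc A B"
    then obtain y z where yz: "x = y @ z" "y \<in> A" "z \<in> B" unfolding conc_def by blast
    then obtain e1 e2 where "e1 \<in> I1" "y \<in> ilang e1" "e2 \<in> I2" "z \<in> ilang e2" using I by blast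
    then have "x \<in> ilang (e1 @ e2)" unfolding ilang_append conc_def using yz by blast
    then show "x \<in> \<Union>(ilang ` {e1 @ e2 | e1 e2. e1 \<in> I1 \<and> e2 \<in> I2})"
      using \<open>e1 \<in> I1\<close> \<open>e2 \<in> I2\<close> by blast
  next
    fix x assume "x \<in> \<Union>(ilang ` {e1 @ e2 | e1 e2. e1 \<in> I1 \<and> e2 \<in> I2})"
    then obtain e1 e2 where e: "e1 \<in> I1" "e2 \<in> I2" "x \<in> ilang (e1 @ e2)" by blast
    then obtain y z where "x = y @ z" "y \<in> ilang e1" "z \<in> ilang e2"
      unfolding ilang_append conc_def by blast
    then show "x \<in> conc A B" unfolding conc_def I(1,3) using e by blast
  qed
  moreover have "\<forall>e\<in>{e1 @ e2 | e1 e2. e1 \<in> I1 \<and> e2 \<in> I2}. length e \<le> n1 + n2"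
    using I(2,4) by clarsimp (metis add_mono)
  ultimately show ?thesis unfolding idl_def by blast
qed

lemma down_Un: "down (A \<union> B) = down A \<union> down B"
  unfolding down_def by auto

lemma down_UN: "down (\<Union>i\<in>S. A i) = (\<Union>i\<in>S. down (A i))"
  unfolding down_def by auto

lemma ds_Un: "down_strict (A \<union> B) = down_strict A \<union> down_strict B"
  unfolding down_strict_def by auto

lemma ds_UN: "down_strict (\<Union>i\<in>S. A i) = (\<Union>i\<in>S. down_strict (A i))"
  unfolding down_strict_def by auto

lemma down_empty: "down {} = {}" and ds_empty: "down_strict {} = {}"
  unfolding down_def down_strict_def by auto

lemma down_eps: "down {[]} = {[]}" and ds_eps: "down_strict {[]} = {}"
  unfolding down_def down_strict_def strict_subseq_def by auto

lemma down_single: "down {[a]} = {[], [a]}"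
proof -
  have "subseq v [a] \<longleftrightarrow> v = [] \<or> v = [a]" for v
    by (cases v) auto
  then show ?thesis unfolding down_def by auto
qed

lemma ds_single: "down_strict {[a]} = {[]}"
proof -
  have "strict_subseq v [a] \<longleftrightarrow> v = []" for v
    unfolding strict_subseq_def by (cases v) auto
  then show ?thesis unfolding down_strict_def by auto
qed

lemma down_lists: "down (lists G) = lists G"
  unfolding down_def using subseq_set by (auto intro: subseq_order.order_refl)

lemma down_conc: "down (conc A B) = conc (down A) (down B)"
proof (intro equalityI subsetI)
  fix v assume "v \<in> down (conc A B)"
  then obtain x y where "subseq v (x @ y)" "x \<in> A" "y \<in> B" unfolding down_def conc_def by blast
  then obtain v1 v2 where "v = v1 @ v2" "subseq v1 x" "subseq v2 y" by (auto elim: subseq_appendE)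
  then show "v \<in> conc (down A) (down B)" unfolding down_def conc_def using \<open>x \<in> A\<close> \<open>y \<in> B\<close> by blast
next
  fix v assume "v \<in> conc (down A) (down B)"
  then obtain v1 v2 x y where "v = v1 @ v2" "subseq v1 x" "subseq v2 y" "x \<in> A" "y \<in> B"
    unfolding down_def conc_def by blast
  then have "subseq v (x @ y)" by (simp add: list_emb_append_mono)
  then show "v \<in> down (conc A B)" unfolding down_def conc_def using \<open>x \<in> A\<close> \<open>y \<in> B\<close> by blast
qed

lemma ds_conc: "down_strict (conc A B) = conc (down_strict A) (down B) \<union> conc (down A) (down_strict B)"
proof (intro equalityI subsetI)
  fix v assume "v \<in> down_strict (conc A B)"
  then obtain x y where s: "strict_subseq v (x @ y)" "x \<in> A" "y \<in> B" unfolding down_strict_def conc_def by blast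
  then obtain v1 v2 where v: "v = v1 @ v2" "subseq v1 x" "subseq v2 y"
    by (auto simp: strict_subseq_iff elim: subseq_appendE)
  have "length v1 \<le> length x" "length v2 \<le> length y" using v list_emb_length by blast+
  moreover have "length v < length x + length y" using s(1) by (simp add: strict_subseq_iff)
  ultimately have "length v1 < length x \<or> length v2 < length y" using v(1) by simp linarith
  then show "v \<in> conc (down_strict A) (down B) \<union> conc (down A) (down_strict B)"
    unfolding down_def down_strict_def conc_def strict_subseq_iff using s(2,3) v by blast
next
  fix v assume "v \<in> conc (down_strict A) (down B) \<union> conc (down A) (down_strict B)"
  then obtain v1 v2 where v: "v = v1 @ v2" and
    h: "(v1 \<in> down_strict A \<and> v2 \<in> down B) \<or> (v1 \<in> down A \<and> v2 \<in> down_strict B)"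
    unfolding conc_def by blast
  from h obtain x y where xy: "subseq v1 x" "subseq v2 y" "x \<in> A" "y \<in> B"
    "length v1 < length x \<or> length v2 < length y"
    unfolding down_def down_strict_def strict_subseq_iff by blast
  have "length v1 \<le> length x" "length v2 \<le> length y" using xy list_emb_length by blast+
  then have "strict_subseq v (x @ y)" unfolding strict_subseq_iff v using xy
    by (auto simp: list_emb_append_mono)
  then show "v \<in> down_strict (conc A B)" unfolding down_strict_def conc_def
    using xy by blast
qed

lemma down_eq: "A \<subseteq> B \<Longrightarrow> B \<subseteq> down A \<Longrightarrow> down A = down B"
proof -
  assume 1: "A \<subseteq> B" and 2: "B \<subseteq> down A"
  show ?thesis
  proof (intro equalityI subsetI)
    fix v assume "v \<in> down A" then show "v \<in> down B" using 1 unfolding down_def by blast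
  next
    fix v assume "v \<in> down B"
    then obtain u where "u \<in> B" "subseq v u" unfolding down_def by blast
    then obtain u' where "u' \<in> A" "subseq u u'" using 2 unfolding down_def by blast
    then show "v \<in> down A" using \<open>subseq v u\<close> unfolding down_def
      using subseq_order.trans by blast
  qed
qed

lemma ds_sub_down: "down_strict A \<subseteq> down A"
  unfolding down_def down_strict_def strict_subseq_def by auto


definition R :: "('s, 'a) nfa \<Rightarrow> 's \<Rightarrow> 's \<Rightarrow> bool" where
  "R M x y \<longleftrightarrow> (\<exists>a. (x, a, y) \<in> trans M)"

inductive run :: "('s, 'a) nfa \<Rightarrow> 's \<Rightarrow> 'a list \<Rightarrow> 's \<Rightarrow> bool" for M where
  rnil: "run M p [] p"
| rcons: "(p, a, r) \<in> trans M \<Longrightarrow> run M r w s \<Longrightarrow> run M p (a # w) s"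

definition Lq :: "('s, 'a) nfa \<Rightarrow> 's \<Rightarrow> 'a list set" where
  "Lq M q = {w. \<exists>f\<in>final M. run M q w f}"

lemma run_append: "run M p u r \<Longrightarrow> run M r v s \<Longrightarrow> run M p (u @ v) s"
  by (induction rule: run.induct) (simp_all add: run.rcons)

lemma run_R: "run M p w s \<Longrightarrow> (R M)\<^sup>*\<^sup>* p s"
proof (induction rule: run.induct)
  case (rnil p) then show ?case by simp
next
  case (rcons p a r w s)
  have "R M p r" using rcons(1) unfolding R_def by blast
  then show ?case using rcons(3) by (rule converse_rtranclp_into_rtranclp)
qed

lemma R_run: "(R M)\<^sup>*\<^sup>* p s \<Longrightarrow> \<exists>w. run M p w s"
proof (induction rule: converse_rtranclp_induct)
  case base then show ?case using rnil[of M s] by blast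
next
  case (step y z)
  then obtain w a where "run M z w s" "(y, a, z) \<in> trans M" unfolding R_def by blast
  then have "run M y (a # w) s" by (intro rcons)
  then show ?case by blast
qed

lemma run_nil: "run M p [] s \<Longrightarrow> p = s"
  by (erule run.cases) auto

lemma run_iff_idx:
  fixes M :: "('s, 'a) nfa" and w :: "'a list"
  shows "run M p w s \<longleftrightarrow> (\<exists>qs. length qs = Suc (length w) \<and> hd qs = p \<and> last qs = s
       \<and> (\<forall>i < length w. (qs ! i, w ! i, qs ! Suc i) \<in> trans M))"
proof (induction w arbitrary: p)
  case Nil
  show ?case
  proof
    assume "run M p [] s" then have "p = s" by (rule run_nil)
    then show "\<exists>qs. length qs = Suc (length ([]::'a list)) \<and> hd qs = p \<and> last qs = s
       \<and> (\<forall>i < length ([]::'a list). (qs ! i, ([]::'a list) ! i, qs ! Suc i) \<in> trans M)"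
      by (intro exI[of _ "[p]"]) auto
  next
    assume "\<exists>qs. length qs = Suc (length ([]::'a list)) \<and> hd qs = p \<and> last qs = s
       \<and> (\<forall>i < length ([]::'a list). (qs ! i, ([]::'a list) ! i, qs ! Suc i) \<in> trans M)"
    then obtain qs where "length qs = 1" "hd qs = p" "last qs = s" by auto
    then have "p = s" by (cases qs) auto
    then show "run M p [] s" by (auto intro: run.intros)
  qed
next
  case (Cons a w)
  show ?case
  proof
    assume "run M p (a # w) s"
    then obtain r where r: "(p, a, r) \<in> trans M" "run M r w s" by (cases rule: run.cases) auto
    then obtain qs where qs: "length qs = Suc (length w)" "hd qs = r" "last qs = s"
      "\<forall>i < length w. (qs ! i, w ! i, qs ! Suc i) \<in> trans M" using Cons by blast
    have "\<forall>i < length (a # w). ((p # qs) ! i, (a # w) ! i, (p # qs) ! Suc i) \<in> trans M"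
    proof (intro allI impI)
      fix i assume "i < length (a # w)"
      then show "((p # qs) ! i, (a # w) ! i, (p # qs) ! Suc i) \<in> trans M"
      proof (cases i)
        case 0
        have "qs \<noteq> []" using qs(1) by auto
        then show ?thesis using qs r 0 by (auto simp: hd_conv_nth)
      next
        case (Suc j)
        then show ?thesis using qs \<open>i < length (a # w)\<close> by auto
      qed
    qed
    then show "\<exists>qs. length qs = Suc (length (a # w)) \<and> hd qs = p \<and> last qs = s
       \<and> (\<forall>i < length (a # w). (qs ! i, (a # w) ! i, qs ! Suc i) \<in> trans M)"
      using qs by (intro exI[of _ "p # qs"]) auto
  next
    assume "\<exists>qs. length qs = Suc (length (a # w)) \<and> hd qs = p \<and> last qs = s
       \<and> (\<forall>i < length (a # w). (qs ! i, (a # w) ! i, qs ! Suc i) \<in> trans M)"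
    then obtain qs where qs: "length qs = Suc (length (a # w))" "hd qs = p" "last qs = s"
       "\<forall>i < length (a # w). (qs ! i, (a # w) ! i, qs ! Suc i) \<in> trans M" by blast
    obtain qs' where qs': "qs = p # qs'" using qs(1,2) by (cases qs) auto
    have "qs' \<noteq> []" using qs(1) qs' by auto
    have "(p, a, hd qs') \<in> trans M" using qs(4)[rule_format, of 0] qs' \<open>qs' \<noteq> []\<close>
      by (auto simp: hd_conv_nth)
    moreover have "run M (hd qs') w s"
    proof -
      have "\<forall>i < length w. (qs' ! i, w ! i, qs' ! Suc i) \<in> trans M"
      proof (intro allI impI)
        fix i assume "i < length w"
        then show "(qs' ! i, w ! i, qs' ! Suc i) \<in> trans M"
          using qs(4)[rule_format, of "Suc i"] qs' by simp
      qed
      moreover have "length qs' = Suc (length w)" "last qs' = s"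
        using qs qs' \<open>qs' \<noteq> []\<close> by auto
      ultimately show ?thesis using Cons.IH[of "hd qs'"] by blast
    qed
    ultimately show "run M p (a # w) s" by (rule run.intros)
  qed
qed

lemma nfa_lang_eq: "nfa_lang M = (\<Union>q\<in>init M. Lq M q)"
proof (intro equalityI subsetI)
  fix w assume "w \<in> nfa_lang M"
  then obtain qs where qs: "length qs = Suc (length w)" "hd qs \<in> init M" "last qs \<in> final M"
    "\<forall>i < length w. (qs ! i, w ! i, qs ! Suc i) \<in> trans M" unfolding nfa_lang_def by blast
  then have "run M (hd qs) w (last qs)" unfolding run_iff_idx by blast
  then show "w \<in> (\<Union>q\<in>init M. Lq M q)" unfolding Lq_def using qs by blast
next
  fix w assume "w \<in> (\<Union>q\<in>init M. Lq M q)"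
  then obtain q f where "q \<in> init M" "f \<in> final M" "run M q w f" unfolding Lq_def by blast
  then obtain qs where qs: "length qs = Suc (length w)" "hd qs = q" "last qs = f"
    "\<forall>i < length w. (qs ! i, w ! i, qs ! Suc i) \<in> trans M" unfolding run_iff_idx by blast
  then show "w \<in> nfa_lang M" unfolding nfa_lang_def using \<open>q \<in> init M\<close> \<open>f \<in> final M\<close>
    by (intro CollectI exI[of _ qs]) simp
qed

definition scc :: "('s, 'a) nfa \<Rightarrow> 's \<Rightarrow> 's set" where
  "scc M q = {p. (R M)\<^sup>*\<^sup>* q p \<and> (R M)\<^sup>*\<^sup>* p q}"

definition lpset :: "('s, 'a) nfa \<Rightarrow> 's \<Rightarrow> 'a set" where
  "lpset M q = {b. \<exists>w. run M q w q \<and> b \<in> set w}"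

definition exitl :: "('s, 'a) nfa \<Rightarrow> 's set \<Rightarrow> 's \<Rightarrow> 'a list set" where
  "exitl M C p1 = (if p1 \<in> final M then {[]} else {})
     \<union> (\<Union>(a, p')\<in>{(a, p'). (p1, a, p') \<in> trans M \<and> p' \<notin> C}. conc {[a]} (Lq M p'))"

definition bnd :: "('s, 'a) nfa \<Rightarrow> 's \<Rightarrow> nat \<Rightarrow> bool" where
  "bnd M q d \<longleftrightarrow> (\<forall>xs f. f \<in> final M \<longrightarrow> rtrancl_path (R M) q xs f \<longrightarrow> distinct (q # xs)
      \<longrightarrow> length xs \<le> d)"

lemma decomp:
  assumes "run M p w f" "f \<in> final M" "p \<in> C"
  shows "\<exists>u p1 e. run M p u p1 \<and> p1 \<in> C \<and> w = u @ e \<and> e \<in> exitl M C p1"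
  using assms
proof (induction rule: run.induct)
  case (rnil p)
  have "[] \<in> exitl M C p" using rnil unfolding exitl_def by simp
  then show ?case using rnil run.rnil[of M p] by fastforce
next
  case (rcons p a r w s)
  show ?case
  proof (cases "r \<in> C")
    case True
    then obtain u p1 e where "run M r u p1" "p1 \<in> C" "w = u @ e" "e \<in> exitl M C p1"
      using rcons by blast
    moreover have "run M p (a # u) p1" using rcons(1) calculation(1) by (rule run.rcons)
    ultimately show ?thesis by (metis append_Cons)
  next
    case False
    have "w \<in> Lq M r" unfolding Lq_def using rcons by blast
    then have "a # w \<in> conc {[a]} (Lq M r)" unfolding conc_def by force
    then have "a # w \<in> exitl M C p" unfolding exitl_def using rcons(1) False by blast
    then show ?thesis using rcons(5) run.rnil[of M p] by fastforce
  qed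
qed

lemma exitl_sub: "e \<in> exitl M C p1 \<Longrightarrow> \<exists>f\<in>final M. run M p1 e f"
proof -
  assume "e \<in> exitl M C p1"
  then consider "e = []" "p1 \<in> final M"
    | a p' w where "(p1, a, p') \<in> trans M" "e = a # w" "w \<in> Lq M p'"
    unfolding exitl_def conc_def by (auto split: if_splits)
  then show ?thesis
  proof cases
    case 1 then show ?thesis using run.rnil[of M p1] by blast
  next
    case 2
    then obtain f where "f \<in> final M" "run M p' w f" unfolding Lq_def by blast
    moreover have "run M p1 (a # w) f" using 2(1) \<open>run M p' w f\<close> by (rule run.rcons)
    ultimately show ?thesis using 2(2) by blast
  qed
qed

lemma path_states: "rtrancl_path r x xs y \<Longrightarrow> z \<in> set xs \<Longrightarrow> r\<^sup>*\<^sup>* x z \<and> r\<^sup>*\<^sup>* z y"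
proof (induction rule: rtrancl_path.induct)
  case (base x) then show ?case by simp
next
  case (step x y ys z')
  have "r\<^sup>*\<^sup>* y z'" using step(2) rtranclp_eq_rtrancl_path by metis
  show ?case
  proof (cases "z = y")
    case True then show ?thesis using step(1) \<open>r\<^sup>*\<^sup>* y z'\<close> by auto
  next
    case False
    then have "z \<in> set ys" using step(4) by simp
    then show ?thesis using step(1,3) by (meson converse_rtranclp_into_rtranclp)
  qed
qed

lemma exit_bnd:
  assumes "bnd M q d" "p1 \<in> scc M q" "(p1, a, p') \<in> trans M" "p' \<notin> scc M q"
    "f \<in> final M" "rtrancl_path (R M) p' ys f" "distinct (p' # ys)"
  shows "Suc (length ys) \<le> d"
proof -
  have qp1: "(R M)\<^sup>*\<^sup>* q p1" and p1q: "(R M)\<^sup>*\<^sup>* p1 q" using assms(2) unfolding scc_def by auto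
  obtain xs0 where "rtrancl_path (R M) q xs0 p1" using qp1 rtranclp_eq_rtrancl_path by metis
  then obtain xs1 where xs1: "rtrancl_path (R M) q xs1 p1" "distinct (q # xs1)" "set xs1 \<subseteq> set xs0"
    using rtrancl_path_distinct by metis
  have Rp1: "R M p1 p'" using assms(3) unfolding R_def by blast
  have inC: "z \<in> scc M q" if "z \<in> set (q # xs1)" for z
  proof (cases "z = q")
    case True then show ?thesis unfolding scc_def by simp
  next
    case False
    then have "z \<in> set xs1" using that by simp
    then have "(R M)\<^sup>*\<^sup>* q z" "(R M)\<^sup>*\<^sup>* z p1" using path_states xs1(1) by metis+
    then show ?thesis unfolding scc_def using p1q by auto
  qed
  have notC: "z \<notin> scc M q" if "z \<in> set (p' # ys)" for z
  proof
    assume zC: "z \<in> scc M q"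
    have "(R M)\<^sup>*\<^sup>* p' z"
    proof (cases "z = p'")
      case True then show ?thesis by simp
    next
      case False
      then have "z \<in> set ys" using that by simp
      then show ?thesis using path_states assms(6) by metis
    qed
    then have "(R M)\<^sup>*\<^sup>* p' q" using zC unfolding scc_def by auto
    moreover have "(R M)\<^sup>*\<^sup>* q p'" using qp1 Rp1 by (simp add: rtranclp.rtrancl_into_rtrancl)
    ultimately show False using assms(4) unfolding scc_def by auto
  qed
  have "rtrancl_path (R M) p1 (p' # ys) f" using Rp1 assms(6) by (rule rtrancl_path.step)
  then have path: "rtrancl_path (R M) q (xs1 @ p' # ys) f" by (rule rtrancl_path_trans[OF xs1(1)])
  have "distinct (q # xs1 @ p' # ys)"
  proof -
    have "set (q # xs1) \<inter> set (p' # ys) = {}" using inC notC by blast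
    then show ?thesis using xs1(2) assms(7) by auto
  qed
  then have "length (xs1 @ p' # ys) \<le> d" using assms(1,5) path unfolding bnd_def by blast
  then show ?thesis by simp
qed

lemma lpset_lists: "s \<in> lists (lpset M q) \<Longrightarrow> \<exists>U. run M q U q \<and> subseq s U"
proof (induction s)
  case Nil then show ?case using run.rnil[of M q] by blast
next
  case (Cons b s)
  then obtain U where U: "run M q U q" "subseq s U" by auto
  obtain w where w: "run M q w q" "b \<in> set w" using Cons(2) unfolding lpset_def by auto
  have "run M q (w @ U) q" using w(1) U(1) by (rule run_append)
  moreover have "subseq ([b] @ s) (w @ U)"
    using U(2) w(2) by (intro list_emb_append_mono) (auto simp: subseq_singleton_left)
  ultimately show ?case by auto
qed

lemma ds_if: "down_strict (if P then {[]} else {}) = {}"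
  by (simp add: ds_eps ds_empty)

lemma exit_piece:
  assumes IH: "\<And>d' p. d' < d \<Longrightarrow> bnd M p d' \<Longrightarrow>
      idl (2 * d' + 1) (down (Lq M p)) \<and> idl (2 * d' + 1) (down_strict (Lq M p))"
    and b: "bnd M q d" and p1: "p1 \<in> scc M q" and tr: "(p1, a, p') \<in> trans M"
    and p': "p' \<notin> scc M q"
  shows "idl (2 * d) (conc {[], [a]} (down (Lq M p')))"
    "idl (2 * d) (conc {[]} (down (Lq M p')) \<union> conc {[], [a]} (down_strict (Lq M p')))"
proof -
  have "idl (2 * d) (conc {[], [a]} (down (Lq M p'))) \<and>
    idl (2 * d) (conc {[]} (down (Lq M p')) \<union> conc {[], [a]} (down_strict (Lq M p')))"
  proof (cases "Lq M p' = {}")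
    case True
    then show ?thesis by (simp add: down_empty ds_empty conc_empty idl_empty)
  next
    case False
    then obtain w f where "f \<in> final M" "run M p' w f" unfolding Lq_def by blast
    have "(R M)\<^sup>*\<^sup>* p' f" using \<open>run M p' w f\<close> by (rule run_R)
    then obtain ys0 where "rtrancl_path (R M) p' ys0 f" using rtranclp_eq_rtrancl_path by metis
    then obtain ys where "rtrancl_path (R M) p' ys f" "distinct (p' # ys)"
      using rtrancl_path_distinct by metis
    then have "Suc (length ys) \<le> d" using exit_bnd[OF b p1 tr p' \<open>f \<in> final M\<close>] by blast
    then have d1: "d - 1 < d" "2 * (d - 1) + 1 + 1 = 2 * d" by auto
    have "bnd M p' (d - 1)" unfolding bnd_def
    proof (intro allI impI)
      fix xs f' assume "f' \<in> final M" "rtrancl_path (R M) p' xs f'" "distinct (p' # xs)"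
      then have "Suc (length xs) \<le> d" using exit_bnd[OF b p1 tr p'] by blast
      then show "length xs \<le> d - 1" by simp
    qed
    then have ih: "idl (2 * (d - 1) + 1) (down (Lq M p'))" "idl (2 * (d - 1) + 1) (down_strict (Lq M p'))"
      using IH[OF d1(1)] by blast+
    have 1: "idl (2 * d) (conc {[], [a]} (down (Lq M p')))"
      using idl_conc[OF idl_opt ih(1)] d1(2) by simp
    have "idl (2 * d) (conc {[], [a]} (down_strict (Lq M p')))"
      using idl_conc[OF idl_opt ih(2)] d1(2) by simp
    moreover have "idl (2 * d) (conc {[]} (down (Lq M p')))"
      using idl_mono[OF ih(1)] d1 by (simp add: conc_eps)
    ultimately show ?thesis using 1 idl_Un by blast
  qed
  then show "idl (2 * d) (conc {[], [a]} (down (Lq M p')))"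
    "idl (2 * d) (conc {[]} (down (Lq M p')) \<union> conc {[], [a]} (down_strict (Lq M p')))" by blast+
qed

lemma nfa_main: "bnd M q d \<Longrightarrow> idl (2 * d + 1) (down (Lq M q)) \<and> idl (2 * d + 1) (down_strict (Lq M q))"
proof (induction d arbitrary: q rule: less_induct)
  case (less d q)
  define C where "C = scc M q"
  define G where "G = lpset M q"
  define E where "E = (\<Union>p1\<in>C. exitl M C p1)"
  have qC: "q \<in> C" unfolding C_def scc_def by simp
  define X where "X = (\<lambda>p1. {(a, p'). (p1, a, p') \<in> trans M \<and> p' \<notin> C})"
  have IH: "\<And>d' p. d' < d \<Longrightarrow> bnd M p d' \<Longrightarrow>
      idl (2 * d' + 1) (down (Lq M p)) \<and> idl (2 * d' + 1) (down_strict (Lq M p))"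
    using less.IH by blast
  have ex1: "idl (2 * d) (conc {[], [a]} (down (Lq M p')))"
    if "p1 \<in> C" "(a, p') \<in> X p1" for p1 a p'
    using exit_piece(1)[OF IH less.prems, of p1 a p'] that unfolding X_def C_def by blast
  have ex2: "idl (2 * d) (conc {[]} (down (Lq M p')) \<union> conc {[], [a]} (down_strict (Lq M p')))"
    if "p1 \<in> C" "(a, p') \<in> X p1" for p1 a p'
    using exit_piece(2)[OF IH less.prems, of p1 a p'] that unfolding X_def C_def by blast
  have exitl_eq: "exitl M C p1 = (if p1 \<in> final M then {[]} else {})
     \<union> (\<Union>(a, p')\<in>X p1. conc {[a]} (Lq M p'))" for p1
    unfolding exitl_def X_def by simp
  have down_ex: "idl (2 * d) (down (exitl M C p1))" if "p1 \<in> C" for p1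
  proof -
    have "down (exitl M C p1) = down (if p1 \<in> final M then {[]} else {})
     \<union> (\<Union>(a, p')\<in>X p1. conc {[], [a]} (down (Lq M p')))"
      unfolding exitl_eq down_Un down_UN by (simp add: split_def down_conc down_single)
    moreover have "idl (2 * d) (down (if p1 \<in> final M then {[]} else {}))"
      by (simp add: down_eps down_empty idl_eps idl_empty)
    moreover have "idl (2 * d) (\<Union>(a, p')\<in>X p1. conc {[], [a]} (down (Lq M p')))"
      using ex1[OF that] by (intro idl_UN) auto
    ultimately show ?thesis using idl_Un by metis
  qed
  have Lsub: "Lq M q \<subseteq> conc (lists G) E"
  proof
    fix w assume "w \<in> Lq M q"
    then obtain f where f: "f \<in> final M" "run M q w f" unfolding Lq_def by blast
    then obtain u p1 e where ue: "run M q u p1" "p1 \<in> C" "w = u @ e" "e \<in> exitl M C p1"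
      using decomp[OF f(2) f(1) qC] by blast
    have rq: "(R M)\<^sup>*\<^sup>* p1 q" using ue(2) unfolding C_def scc_def by blast
    obtain u' where "run M p1 u' q" using R_run[OF rq] by blast
    then have "run M q (u @ u') q" by (rule run_append[OF ue(1)])
    have "\<forall>b\<in>set u. b \<in> G"
    proof
      fix b assume "b \<in> set u" then have "b \<in> set (u @ u')" by simp
      then show "b \<in> G" unfolding G_def lpset_def using \<open>run M q (u @ u') q\<close> by blast
    qed
    then have "u \<in> lists G" by (simp add: in_lists_conv_set)
    then show "w \<in> conc (lists G) E" unfolding conc_def E_def using ue by blast
  qed
  have sub2: "conc (lists G) E \<subseteq> down (Lq M q)"
  proof
    fix x assume "x \<in> conc (lists G) E"
    then obtain s e p1 where se: "x = s @ e" "s \<in> lists G" "p1 \<in> C" "e \<in> exitl M C p1"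
      unfolding conc_def E_def by blast
    obtain U where U: "run M q U q" "subseq s U" using lpset_lists[OF se(2)[unfolded G_def]] by blast
    have rq: "(R M)\<^sup>*\<^sup>* q p1" using se(3) unfolding C_def scc_def by blast
    obtain u where u: "run M q u p1" using R_run[OF rq] by blast
    obtain f where f: "f \<in> final M" "run M p1 e f" using exitl_sub[OF se(4)] by blast
    have "run M q (U @ u @ e) f" by (rule run_append[OF U(1) run_append[OF u f(2)]])
    then have "U @ u @ e \<in> Lq M q" unfolding Lq_def using f(1) by blast
    moreover have "subseq (s @ e) (U @ (u @ e))"
      by (rule list_emb_append_mono[OF U(2)]) (simp add: list_emb_append2)
    ultimately show "x \<in> down (Lq M q)" unfolding down_def using se(1) by auto
  qed
  have "down (Lq M q) = down (conc (lists G) E)" using down_eq[OF Lsub sub2] .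
  also have "\<dots> = conc (lists G) (down E)" by (simp add: down_conc down_lists)
  finally have Dq: "down (Lq M q) = conc (lists G) (down E)" .
  have "idl (2 * d) (down E)" unfolding E_def down_UN using down_ex by (intro idl_UN) auto
  then have D: "idl (2 * d + 1) (down (Lq M q))" unfolding Dq using idl_conc[OF idl_lists] by simp
  have S: "idl (2 * d + 1) (down_strict (Lq M q))"
  proof (cases "\<exists>c. c \<noteq> [] \<and> run M q c q")
    case True
    then obtain c where c: "c \<noteq> []" "run M q c q" by blast
    have "down (Lq M q) \<subseteq> down_strict (Lq M q)"
    proof
      fix v assume "v \<in> down (Lq M q)"
      then obtain w f where w: "subseq v w" "f \<in> final M" "run M q w f"
        unfolding down_def Lq_def by blast
      have "run M q (c @ w) f" using c(2) w(3) by (rule run_append)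
      then have "c @ w \<in> Lq M q" using w(2) unfolding Lq_def by blast
      moreover have "strict_subseq v (c @ w)" unfolding strict_subseq_iff
        using w(1) c(1) list_emb_length[OF w(1)] by (cases c) (auto simp: list_emb_append2)
      ultimately show "v \<in> down_strict (Lq M q)" unfolding down_strict_def by blast
    qed
    then have "down_strict (Lq M q) = down (Lq M q)" using ds_sub_down by blast
    then show ?thesis using D by simp
  next
    case False
    have "Lq M q = exitl M C q"
    proof (intro equalityI subsetI)
      fix w assume "w \<in> Lq M q"
      then obtain f where f: "f \<in> final M" "run M q w f" unfolding Lq_def by blast
      then obtain u p1 e where ue: "run M q u p1" "p1 \<in> C" "w = u @ e" "e \<in> exitl M C p1"
        using decomp[OF f(2) f(1) qC] by blast
      have rq: "(R M)\<^sup>*\<^sup>* p1 q" using ue(2) unfolding C_def scc_def by blast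
      obtain u' where "run M p1 u' q" using R_run[OF rq] by blast
      then have "run M q (u @ u') q" by (rule run_append[OF ue(1)])
      then have "u = []" using False by auto
      then have "p1 = q" using ue(1) run_nil by metis
      then show "w \<in> exitl M C q" using ue \<open>u = []\<close> by simp
    next
      fix w assume "w \<in> exitl M C q"
      then obtain f where "f \<in> final M" "run M q w f" using exitl_sub[OF \<open>w \<in> exitl M C q\<close>] by blast
      then show "w \<in> Lq M q" unfolding Lq_def by blast
    qed
    then have "down_strict (Lq M q) = down_strict (exitl M C q)" by simp
    also have "\<dots> = (\<Union>(a, p')\<in>X q. down_strict (conc {[a]} (Lq M p')))"
      unfolding exitl_eq ds_Un ds_UN ds_if by (simp add: split_def)
    also have "\<dots> = (\<Union>(a, p')\<in>X q. conc {[]} (down (Lq M p')) \<union> conc {[], [a]} (down_strict (Lq M p')))"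
      apply (intro SUP_cong refl)
      subgoal for x by (cases x) (simp add: ds_conc ds_single down_single)
      done
    finally have "down_strict (Lq M q) = \<dots>" .
    moreover have "idl (2 * d) (\<Union>(a, p')\<in>X q. conc {[]} (down (Lq M p')) \<union> conc {[], [a]} (down_strict (Lq M p')))"
      using ex2[OF qC] by (intro idl_UN) auto
    ultimately show ?thesis using idl_mono by fastforce
  qed
  show ?case using D S by blast
qed


lemma simple_path_states:
  assumes "wf_nfa M" "simple_path M qs"
  shows "set qs \<subseteq> states M"
proof
  fix x assume "x \<in> set qs"
  then obtain i where i: "i < length qs" "qs ! i = x" by (auto simp: in_set_conv_nth)
  show "x \<in> states M"
  proof (cases i)
    case 0
    then have "x = hd qs" using i assms(2) unfolding simple_path_def by (simp add: hd_conv_nth)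
    then show ?thesis using assms unfolding simple_path_def wf_nfa_def by blast
  next
    case (Suc j)
    then obtain a where "(qs ! j, a, qs ! Suc j) \<in> trans M" using assms(2) i(1) unfolding simple_path_def by blast
    then show ?thesis using assms(1) i(2) Suc unfolding wf_nfa_def by blast
  qed
qed

lemma finite_depth_set:
  assumes "wf_nfa M"
  shows "finite {length qs - 1 | qs. simple_path M qs}"
proof -
  have fin: "finite (states M)" using assms unfolding wf_nfa_def by blast
  have "{length qs - 1 | qs. simple_path M qs} \<subseteq>
      (\<lambda>qs. length qs - 1) ` {qs. set qs \<subseteq> states M \<and> length qs \<le> card (states M)}"
  proof
    fix n assume "n \<in> {length qs - 1 | qs. simple_path M qs}"
    then obtain qs where qs: "n = length qs - 1" "simple_path M qs" by blast
    have "set qs \<subseteq> states M" using simple_path_states[OF assms qs(2)] .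
    moreover have "length qs \<le> card (states M)"
      using qs(2) calculation fin unfolding simple_path_def by (metis card_mono distinct_card)
    ultimately show "n \<in> (\<lambda>qs. length qs - 1) ` {qs. set qs \<subseteq> states M \<and> length qs \<le> card (states M)}"
      using qs(1) by blast
  qed
  moreover have "finite {qs. set qs \<subseteq> states M \<and> length qs \<le> card (states M)}"
    using finite_lists_length_le[OF fin] by blast
  ultimately show ?thesis using finite_subset by blast
qed

lemma init_bnd:
  assumes "wf_nfa M" "q \<in> init M"
  shows "bnd M q (nfa_depth M)"
  unfolding bnd_def
proof (intro allI impI)
  fix xs f assume f: "f \<in> final M" and p: "rtrancl_path (R M) q xs f" and d: "distinct (q # xs)"
  have last: "last (q # xs) = f"
  proof (cases "xs = []")
    case True
    then have "q = f" using p by (auto elim: rtrancl_path.cases)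
    then show ?thesis using True by simp
  next
    case False
    then show ?thesis using rtrancl_path_last[OF p False] by simp
  qed
  have edges: "\<forall>i. Suc i < length (q # xs) \<longrightarrow> (\<exists>a. ((q # xs) ! i, a, (q # xs) ! Suc i) \<in> trans M)"
  proof (intro allI impI)
    fix i assume "Suc i < length (q # xs)"
    then have "R M ((q # xs) ! i) (xs ! i)" using rtrancl_path_nth[OF p] by simp
    then show "\<exists>a. ((q # xs) ! i, a, (q # xs) ! Suc i) \<in> trans M" unfolding R_def by simp
  qed
  have "simple_path M (q # xs)" unfolding simple_path_def using assms(2) f d last edges by simp
  then have "length (q # xs) - 1 \<in> {length qs - 1 | qs. simple_path M qs}" by blast
  then have "length (q # xs) - 1 \<le> nfa_depth M"
    unfolding nfa_depth_def using finite_depth_set[OF assms(1)] by (rule Max_ge[rotated])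
  then show "length xs \<le> nfa_depth M" by simp
qed

lemma nfa_part:
  assumes "wf_nfa M"
  shows "is_PT (2 * nfa_depth M + 2) (down (nfa_lang M)) \<and>
         is_PT (2 * nfa_depth M + 2) (down_strict (nfa_lang M))"
proof -
  have "idl (2 * nfa_depth M + 1) (down (Lq M q)) \<and> idl (2 * nfa_depth M + 1) (down_strict (Lq M q))"
    if "q \<in> init M" for q using nfa_main[OF init_bnd[OF assms that]] .
  then have "idl (2 * nfa_depth M + 1) (down (nfa_lang M))"
    "idl (2 * nfa_depth M + 1) (down_strict (nfa_lang M))"
    unfolding nfa_lang_eq down_UN ds_UN by (auto intro!: idl_UN)
  then show ?thesis using idl_PT by fastforce
qed

inductive ctx :: "('n \<times> ('n, 'a) rhs) set \<Rightarrow> 'n \<Rightarrow> 'a list \<Rightarrow> 'n \<Rightarrow> 'a list \<Rightarrow> bool" for P where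
  cref: "ctx P X [] X []"
| cun: "(X, UnitR Y) \<in> P \<Longrightarrow> ctx P Y u T v \<Longrightarrow> ctx P X u T v"
| cl: "(X, Bin Y Z) \<in> P \<Longrightarrow> ctx P Y u T v \<Longrightarrow> derives P Z w \<Longrightarrow> ctx P X u T (v @ w)"
| cr: "(X, Bin Y Z) \<in> P \<Longrightarrow> derives P Y w \<Longrightarrow> ctx P Z u T v \<Longrightarrow> ctx P X (w @ u) T v"

lemma ctx_derives: "ctx P X u T v \<Longrightarrow> derives P T w \<Longrightarrow> derives P X (u @ w @ v)"
proof (induction rule: ctx.induct)
  case (cref X) then show ?case by simp
next
  case (cun X Y u T v) then show ?case by (simp add: derives.un)
next
  case (cl X Y Z u T v w')
  have "derives P Y (u @ w @ v)" using cl by blast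
  then have "derives P X ((u @ w @ v) @ w')" by (rule derives.bin[OF cl(1) _ cl(3)])
  then show ?case by simp
next
  case (cr X Y Z w' u T v)
  have "derives P Z (u @ w @ v)" using cr by blast
  then have "derives P X (w' @ (u @ w @ v))" by (rule derives.bin[OF cr(1) cr(2)])
  then show ?case by simp
qed

lemma ctx_trans: "ctx P X u Y v \<Longrightarrow> ctx P Y u' T v' \<Longrightarrow> ctx P X (u @ u') T (v' @ v)"
proof (induction rule: ctx.induct)
  case (cref X) then show ?case by simp
next
  case (cun X Y u T' v) then show ?case by (simp add: ctx.cun)
next
  case (cl X Y Z u T' v w)
  have "ctx P Y (u @ u') T (v' @ v)" using cl by blast
  then have "ctx P X (u @ u') T ((v' @ v) @ w)" by (rule ctx.cl[OF cl(1) _ cl(3)])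
  then show ?case by simp
next
  case (cr X Y Z w u T' v)
  have "ctx P Z (u @ u') T (v' @ v)" using cr by blast
  then have "ctx P X (w @ (u @ u')) T (v' @ v)" by (rule ctx.cr[OF cr(1) cr(2)])
  then show ?case by simp
qed

definition LX :: "('n \<times> ('n, 'a) rhs) set \<Rightarrow> 'n \<Rightarrow> 'a list set" where
  "LX P X = {w. derives P X w}"

definition reach :: "('n \<times> ('n, 'a) rhs) set \<Rightarrow> 'n \<Rightarrow> 'n set" where
  "reach P X = {Y. \<exists>u v. ctx P X u Y v}"

definition sccG :: "('n \<times> ('n, 'a) rhs) set \<Rightarrow> 'n \<Rightarrow> 'n set" where
  "sccG P X = {Y. (\<exists>u v. ctx P X u Y v) \<and> (\<exists>u v. ctx P Y u X v)}"

definition GL :: "('n \<times> ('n, 'a) rhs) set \<Rightarrow> 'n \<Rightarrow> 'a set" where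
  "GL P X = {b. \<exists>u v. ctx P X u X v \<and> b \<in> set u}"

definition GR :: "('n \<times> ('n, 'a) rhs) set \<Rightarrow> 'n \<Rightarrow> 'a set" where
  "GR P X = {b. \<exists>u v. ctx P X u X v \<and> b \<in> set v}"

fun rl :: "('n \<times> ('n, 'a) rhs) set \<Rightarrow> ('n, 'a) rhs \<Rightarrow> 'a list set" where
  "rl P (Tm a) = {[a]}"
| "rl P Eps = {[]}"
| "rl P (UnitR Z) = LX P Z"
| "rl P (Bin Z1 Z2) = conc (LX P Z1) (LX P Z2)"

definition exits :: "('n \<times> ('n, 'a) rhs) set \<Rightarrow> 'n set \<Rightarrow> ('n \<times> ('n, 'a) rhs) set" where
  "exits P C = {(Y, r). (Y, r) \<in> P \<and> Y \<in> C \<and> rhs_nts r \<inter> C = {}}"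

definition EXL :: "('n \<times> ('n, 'a) rhs) set \<Rightarrow> 'n set \<Rightarrow> 'a list set" where
  "EXL P C = (\<Union>(Y, r)\<in>exits P C. rl P r)"

lemma decompG:
  assumes "derives P Z w" "Z \<in> C"
  shows "\<exists>u Y v r e. ctx P Z u Y v \<and> (Y, r) \<in> exits P C \<and> e \<in> rl P r \<and> w = u @ e @ v"
  using assms
proof (induction rule: derives.induct)
  case (bin X Y Z u1 u2)
  show ?case
  proof (cases "Y \<in> C")
    case True
    then obtain u T v r e where h: "ctx P Y u T v" "(T, r) \<in> exits P C" "e \<in> rl P r" "u1 = u @ e @ v"
      using bin by blast
    have "ctx P X u T (v @ u2)" using bin(1) h(1) bin(3) by (rule ctx.cl)
    then show ?thesis using h by (intro exI[of _ u] exI[of _ T] exI[of _ "v @ u2"] exI[of _ r] exI[of _ e]) auto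
  next
    case nY: False
    show ?thesis
    proof (cases "Z \<in> C")
      case True
      then obtain u T v r e where h: "ctx P Z u T v" "(T, r) \<in> exits P C" "e \<in> rl P r" "u2 = u @ e @ v"
        using bin by blast
      have "ctx P X (u1 @ u) T v" using bin(1) bin(2) h(1) by (rule ctx.cr)
      then show ?thesis using h by (intro exI[of _ "u1 @ u"] exI[of _ T] exI[of _ v] exI[of _ r] exI[of _ e]) auto
    next
      case False
      have "(X, Bin Y Z) \<in> exits P C" using bin(1,6) nY False unfolding exits_def rhs_nts_def by auto
      moreover have "u1 @ u2 \<in> rl P (Bin Y Z)" using bin(2,3) unfolding rl.simps LX_def conc_def by blast
      ultimately show ?thesis using ctx.cref[of P X]
        by (intro exI[of _ "[]"] exI[of _ X] exI[of _ "[]"] exI[of _ "Bin Y Z"] exI[of _ "u1 @ u2"]) auto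
    qed
  qed
next
  case (un X Y u)
  show ?case
  proof (cases "Y \<in> C")
    case True
    then obtain u' T v r e where h: "ctx P Y u' T v" "(T, r) \<in> exits P C" "e \<in> rl P r" "u = u' @ e @ v"
      using un by blast
    have "ctx P X u' T v" using un(1) h(1) by (rule ctx.cun)
    then show ?thesis using h by blast
  next
    case False
    have "(X, UnitR Y) \<in> exits P C" using un(1,4) False unfolding exits_def rhs_nts_def by auto
    moreover have "u \<in> rl P (UnitR Y)" using un(2) by (simp add: LX_def)
    ultimately show ?thesis using ctx.cref[of P X]
      by (intro exI[of _ "[]"] exI[of _ X] exI[of _ "[]"] exI[of _ "UnitR Y"] exI[of _ u]) auto
  qed
next
  case (tm X a)
  have "(X, Tm a) \<in> exits P C" using tm unfolding exits_def rhs_nts_def by auto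
  then show ?case using ctx.cref[of P X]
    by (intro exI[of _ "[]"] exI[of _ X] exI[of _ "[]"] exI[of _ "Tm a"] exI[of _ "[a]"]) auto
next
  case (eps X)
  have "(X, Eps) \<in> exits P C" using eps unfolding exits_def rhs_nts_def by auto
  then show ?case using ctx.cref[of P X]
    by (intro exI[of _ "[]"] exI[of _ X] exI[of _ "[]"] exI[of _ "Eps"] exI[of _ "[]"]) auto
qed

lemma rl_derives: "(Y, r) \<in> P \<Longrightarrow> e \<in> rl P r \<Longrightarrow> derives P Y e"
  by (cases r) (auto simp: LX_def conc_def intro: derives.intros)

lemma pumpL: "s \<in> lists (GL P X) \<Longrightarrow> \<exists>U V. ctx P X U X V \<and> subseq s U"
proof (induction s)
  case Nil then show ?case using ctx.cref[of P X] by blast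
next
  case (Cons b s)
  then obtain U V where U: "ctx P X U X V" "subseq s U" by auto
  obtain u v where w: "ctx P X u X v" "b \<in> set u" using Cons(2) unfolding GL_def by auto
  have "ctx P X (u @ U) X (V @ v)" using w(1) U(1) by (rule ctx_trans)
  moreover have "subseq ([b] @ s) (u @ U)"
    using U(2) w(2) by (intro list_emb_append_mono) (auto simp: subseq_singleton_left)
  ultimately show ?case by auto
qed

lemma pumpR: "s \<in> lists (GR P X) \<Longrightarrow> \<exists>U V. ctx P X U X V \<and> subseq s V"
proof (induction s)
  case Nil then show ?case using ctx.cref[of P X] by blast
next
  case (Cons b s)
  then obtain U V where U: "ctx P X U X V" "subseq s V" by auto
  obtain u v where w: "ctx P X u X v" "b \<in> set v" using Cons(2) unfolding GR_def by auto
  have "ctx P X (U @ u) X (v @ V)" using U(1) w(1) by (rule ctx_trans)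
  moreover have "subseq ([b] @ s) (v @ V)"
    using U(2) w(2) by (intro list_emb_append_mono) (auto simp: subseq_singleton_left)
  ultimately show ?case by auto
qed

lemma ctx_nts:
  assumes "\<forall>(X, r)\<in>P. X \<in> N \<and> rhs_nts r \<subseteq> N"
  shows "ctx P X u Y v \<Longrightarrow> X \<in> N \<Longrightarrow> Y \<in> N"
proof (induction rule: ctx.induct)
  case (cref X) then show ?case by simp
next
  case (cun X Y u T v) then show ?case using assms unfolding rhs_nts_def by fastforce
next
  case (cl X Y Z u T v w) then show ?case using assms unfolding rhs_nts_def by fastforce
next
  case (cr X Y Z w u T v) then show ?case using assms unfolding rhs_nts_def by fastforce
qed


definition fb :: "nat \<Rightarrow> nat" where "fb n = 4 * 3 ^ (n - 1) + 1"

lemma fb_ge: "5 \<le> fb n"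
  unfolding fb_def by simp

lemma fb_mono: "m \<le> n \<Longrightarrow> fb m \<le> fb n"
  unfolding fb_def by (simp add: power_increasing)

lemma fb_step: assumes "1 \<le> m" "m < n" shows "2 * fb m + 2 \<le> fb n"
proof -
  define k where "k = n - 2"
  have k: "n = k + 2" using assms unfolding k_def by simp
  have "fb m \<le> fb (k + 1)" using assms k by (intro fb_mono) simp
  moreover have "fb (k + 1) = 4 * 3 ^ k + 1" unfolding fb_def by simp
  moreover have "fb n = 12 * 3 ^ k + 1" unfolding fb_def k by simp
  moreover have "(1::nat) \<le> 3 ^ k" by simp
  ultimately show ?thesis by linarith
qed

lemma reach_self: "X \<in> reach P X"
  unfolding reach_def using ctx.cref[of P X] by blast

lemma reach_sub:
  assumes "\<forall>(X, r)\<in>P. X \<in> N \<and> rhs_nts r \<subseteq> N" "X \<in> N"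
  shows "reach P X \<subseteq> N"
  unfolding reach_def using ctx_nts[OF assms(1)] assms(2) by blast

lemma child:
  assumes wf: "finite N" "\<forall>(X, r)\<in>P. X \<in> N \<and> rhs_nts r \<subseteq> N" and X: "X \<in> N"
    and Y: "Y \<in> sccG P X" and c: "ctx P Y u' Z v'" and Z: "Z \<notin> sccG P X"
  shows "Z \<in> N \<and> 1 \<le> card (reach P Z) \<and> card (reach P Z) < card (reach P X)"
proof -
  obtain u v where "ctx P X u Y v" using Y unfolding sccG_def by blast
  then have XZ: "ctx P X (u @ u') Z (v' @ v)" using c by (rule ctx_trans)
  then have "Z \<in> reach P X" unfolding reach_def by blast
  then have ZN: "Z \<in> N" using reach_sub[OF wf(2) X] by blast
  have sub: "reach P Z \<subseteq> reach P X"
    unfolding reach_def using ctx_trans[OF XZ] by blast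
  have "X \<notin> reach P Z" using Z XZ unfolding reach_def sccG_def by blast
  then have "reach P Z \<subset> reach P X" using sub reach_self[of X P] by blast
  moreover have "finite (reach P X)" using reach_sub[OF wf(2) X] wf(1) finite_subset by blast
  ultimately have "card (reach P Z) < card (reach P X)" by (rule psubset_card_mono[rotated])
  moreover have "finite (reach P Z)" using reach_sub[OF wf(2) ZN] wf(1) finite_subset by blast
  then have "1 \<le> card (reach P Z)" using reach_self[of Z P]
    by (metis One_nat_def Suc_leI card_gt_0_iff empty_iff)
  ultimately show ?thesis using ZN by blast
qed

lemma exit_pieceG:
  assumes wf: "finite N" "\<forall>(X, r)\<in>P. X \<in> N \<and> rhs_nts r \<subseteq> N" and X: "X \<in> N"
    and n: "card (reach P X) = n"
    and IH: "\<And>n' Z. n' < n \<Longrightarrow> Z \<in> N \<Longrightarrow> card (reach P Z) = n' \<Longrightarrow>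
       idl (fb n') (down (LX P Z)) \<and> idl (fb n') (down_strict (LX P Z))"
    and ex: "(Y, r) \<in> exits P (sccG P X)"
  shows "idl (fb n - 2) (down (rl P r)) \<and> idl (fb n - 2) (down_strict (rl P r))"
proof -
  have Y: "Y \<in> sccG P X" "(Y, r) \<in> P" and disj: "rhs_nts r \<inter> sccG P X = {}"
    using ex unfolding exits_def by auto
  have fbn: "5 \<le> fb n" by (rule fb_ge)
  have ch: "idl (fb n - 2) (down (LX P Z)) \<and> idl (fb n - 2) (down_strict (LX P Z))
     \<and> 1 \<le> card (reach P Z) \<and> card (reach P Z) < n \<and> 2 * fb (card (reach P Z)) + 2 \<le> fb n"
    if "ctx P Y u' Z v'" "Z \<notin> sccG P X" for u' v' Z
  proof -
    have c: "Z \<in> N" "1 \<le> card (reach P Z)" "card (reach P Z) < n"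
      using child[OF wf X Y(1) that] n by auto
    have st: "2 * fb (card (reach P Z)) + 2 \<le> fb n" using fb_step c by blast
    have i: "idl (fb (card (reach P Z))) (down (LX P Z))" "idl (fb (card (reach P Z))) (down_strict (LX P Z))"
      using IH[OF c(3) c(1) refl] by blast+
    have le: "fb (card (reach P Z)) \<le> fb n - 2" using st by linarith
    have "idl (fb n - 2) (down (LX P Z))" by (rule idl_mono[OF i(1) le])
    moreover have "idl (fb n - 2) (down_strict (LX P Z))" by (rule idl_mono[OF i(2) le])
    ultimately show ?thesis using st c by blast
  qed
  show ?thesis
  proof (cases r)
    case (Bin Z1 Z2)
    show ?thesis
    proof (cases "LX P Z1 = {} \<or> LX P Z2 = {}")
      case True
      have "rl P r = conc (LX P Z1) (LX P Z2)" using Bin by simp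
      also have "\<dots> = {}" using True by (elim disjE) (simp_all add: conc_empty)
      finally have "rl P r = {}" .
      then show ?thesis by (simp add: down_empty ds_empty idl_empty)
    next
      case False
      then obtain w1 w2 where w: "derives P Z1 w1" "derives P Z2 w2" unfolding LX_def by blast
      have Z: "Z1 \<notin> sccG P X" "Z2 \<notin> sccG P X" using disj Bin unfolding rhs_nts_def by auto
      have yb: "(Y, Bin Z1 Z2) \<in> P" using Y(2) Bin by simp
      have "ctx P Y [] Z1 ([] @ w2)" by (rule ctx.cl[OF yb ctx.cref w(2)])
      note c1 = ch[OF this Z(1)]
      have "ctx P Y (w1 @ []) Z2 []" by (rule ctx.cr[OF yb w(1) ctx.cref])
      note c2 = ch[OF this Z(2)]
      define n1 where "n1 = card (reach P Z1)"
      define n2 where "n2 = card (reach P Z2)"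
      have z1: "Z1 \<in> N" using child[OF wf X Y(1) \<open>ctx P Y [] Z1 ([] @ w2)\<close> Z(1)] by blast
      have z2: "Z2 \<in> N" using child[OF wf X Y(1) \<open>ctx P Y (w1 @ []) Z2 []\<close> Z(2)] by blast
      have lt: "n1 < n" "n2 < n" "2 * fb n1 + 2 \<le> fb n" "2 * fb n2 + 2 \<le> fb n"
        using c1 c2 n1_def n2_def by simp_all
      have i1: "idl (fb n1) (down (LX P Z1))" "idl (fb n1) (down_strict (LX P Z1))"
        using IH[OF lt(1) z1 n1_def[symmetric]] by blast+
      have i2: "idl (fb n2) (down (LX P Z2))" "idl (fb n2) (down_strict (LX P Z2))"
        using IH[OF lt(2) z2 n2_def[symmetric]] by blast+
      have le: "fb n1 + fb n2 \<le> fb n - 2" using lt(3,4) by linarith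
      have "idl (fb n1 + fb n2) (down (rl P r))"
        unfolding Bin rl.simps down_conc by (rule idl_conc[OF i1(1) i2(1)])
      moreover have "idl (fb n1 + fb n2) (down_strict (rl P r))"
        unfolding Bin rl.simps ds_conc by (rule idl_Un[OF idl_conc[OF i1(2) i2(1)] idl_conc[OF i1(1) i2(2)]])
      ultimately show ?thesis using idl_mono[OF _ le] by blast
    qed
  next
    case (UnitR Z)
    show ?thesis
    proof -
      have Z: "Z \<notin> sccG P X" using disj UnitR unfolding rhs_nts_def by auto
      have yb: "(Y, UnitR Z) \<in> P" using Y(2) UnitR by simp
      have cz: "ctx P Y [] Z []" by (rule ctx.cun[OF yb ctx.cref])
      show ?thesis using ch[OF cz Z] UnitR by simp
    qed
  next
    case (Tm a)
    have "1 \<le> fb n - 2" using fbn by simp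
    then have "idl (fb n - 2) {[], [a]}" by (rule idl_mono[OF idl_opt])
    then show ?thesis using Tm by (simp add: down_single ds_single idl_eps)
  next
    case Eps
    then show ?thesis by (simp add: down_eps ds_eps idl_eps idl_empty)
  qed
qed

lemma cfg_main:
  assumes wf: "finite N" "\<forall>(X, r)\<in>P. X \<in> N \<and> rhs_nts r \<subseteq> N"
  shows "X \<in> N \<Longrightarrow> card (reach P X) = n \<Longrightarrow>
    idl (fb n) (down (LX P X)) \<and> idl (fb n) (down_strict (LX P X))"
proof (induction n arbitrary: X rule: less_induct)
  case (less n X)
  define C where "C = sccG P X"
  define E where "E = EXL P C"
  define GLX where "GLX = GL P X"
  define GRX where "GRX = GR P X"
  have XC: "X \<in> C" unfolding C_def sccG_def using ctx.cref[of P X] by blast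
  have IH: "\<And>n' Z. n' < n \<Longrightarrow> Z \<in> N \<Longrightarrow> card (reach P Z) = n' \<Longrightarrow>
       idl (fb n') (down (LX P Z)) \<and> idl (fb n') (down_strict (LX P Z))"
    using less.IH by blast
  have piece: "idl (fb n - 2) (down (rl P r)) \<and> idl (fb n - 2) (down_strict (rl P r))"
    if "(Y, r) \<in> exits P C" for Y r
    using exit_pieceG[OF wf less.prems IH, of Y r] that unfolding C_def by blast
  have pumpC: "set u \<subseteq> GLX \<and> set v \<subseteq> GRX" if uvY: "ctx P X u Y v" "Y \<in> C" for u v Y
  proof -
    obtain u' v' where "ctx P Y u' X v'" using uvY(2) unfolding C_def sccG_def by blast
    then have p: "ctx P X (u @ u') X (v' @ v)" using uvY(1) ctx_trans by metis
    show ?thesis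
    proof
      show "set u \<subseteq> GLX"
      proof
        fix b assume "b \<in> set u" then have "b \<in> set (u @ u')" by simp
        then show "b \<in> GLX" unfolding GLX_def GL_def using p by blast
      qed
      show "set v \<subseteq> GRX"
      proof
        fix b assume "b \<in> set v" then have "b \<in> set (v' @ v)" by simp
        then show "b \<in> GRX" unfolding GRX_def GR_def using p by blast
      qed
    qed
  qed
  have Lsub: "LX P X \<subseteq> conc (conc (lists GLX) E) (lists GRX)"
  proof
    fix w assume "w \<in> LX P X"
    then have "derives P X w" unfolding LX_def by blast
    then obtain u Y v r e where h: "ctx P X u Y v" "(Y, r) \<in> exits P C" "e \<in> rl P r" "w = u @ e @ v"
      using decompG[OF _ XC] by blast
    have "Y \<in> C" using h(2) unfolding exits_def by blast
    then have "set u \<subseteq> GLX" "set v \<subseteq> GRX" using pumpC h(1) by blast+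
    moreover have "e \<in> E" unfolding E_def EXL_def using h(2,3) by blast
    ultimately have "u \<in> lists GLX" "v \<in> lists GRX" "e \<in> E" by auto
    then have "u @ e \<in> conc (lists GLX) E" unfolding conc_def by blast
    then have "(u @ e) @ v \<in> conc (conc (lists GLX) E) (lists GRX)"
      using \<open>v \<in> lists GRX\<close> unfolding conc_def by blast
    then show "w \<in> conc (conc (lists GLX) E) (lists GRX)" using h(4) by simp
  qed
  have sub2: "conc (conc (lists GLX) E) (lists GRX) \<subseteq> down (LX P X)"
  proof
    fix x assume "x \<in> conc (conc (lists GLX) E) (lists GRX)"
    then obtain se s' where "x = se @ s'" "se \<in> conc (lists GLX) E" "s' \<in> lists GRX"
      unfolding conc_def by blast
    moreover then obtain s e where "se = s @ e" "s \<in> lists GLX" "e \<in> E"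
      unfolding conc_def by blast
    moreover then obtain Y r where "(Y, r) \<in> exits P C" "e \<in> rl P r"
      unfolding E_def EXL_def by blast
    ultimately have h: "x = (s @ e) @ s'" "s \<in> lists GLX" "s' \<in> lists GRX"
      "(Y, r) \<in> exits P C" "e \<in> rl P r" by blast+
    obtain U1 V1 where p1: "ctx P X U1 X V1" "subseq s U1" using pumpL[OF h(2)[unfolded GLX_def]] by blast
    obtain U2 V2 where p2: "ctx P X U2 X V2" "subseq s' V2" using pumpR[OF h(3)[unfolded GRX_def]] by blast
    have Y: "Y \<in> C" "(Y, r) \<in> P" using h(4) unfolding exits_def by auto
    obtain u v where uv: "ctx P X u Y v" using Y(1) unfolding C_def sccG_def by blast
    have "ctx P X (U1 @ U2) X (V2 @ V1)" using p1(1) p2(1) by (rule ctx_trans)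
    then have "ctx P X ((U1 @ U2) @ u) Y (v @ (V2 @ V1))" using uv by (rule ctx_trans)
    moreover have "derives P Y e" using rl_derives[OF Y(2) h(5)] .
    ultimately have "derives P X (((U1 @ U2) @ u) @ e @ (v @ (V2 @ V1)))" by (rule ctx_derives)
    moreover have "subseq (s @ e @ s') (((U1 @ U2) @ u) @ e @ (v @ (V2 @ V1)))"
    proof (rule list_emb_append_mono)
      show "subseq s ((U1 @ U2) @ u)" using subseq_rev_drop_many[OF p1(2), of "U2 @ u"] by simp
      have a: "subseq s' (V2 @ V1)" by (rule subseq_rev_drop_many[OF p2(2)])
      have b: "subseq s' (v @ V2 @ V1)" using a by (rule subseq_drop_many)
      show "subseq (e @ s') (e @ v @ V2 @ V1)" using b by (simp add: subseq_append')
    qed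
    ultimately show "x \<in> down (LX P X)" unfolding down_def LX_def using h(1) by auto
  qed
  have "down (LX P X) = down (conc (conc (lists GLX) E) (lists GRX))" using down_eq[OF Lsub sub2] .
  also have "\<dots> = conc (conc (lists GLX) (down E)) (lists GRX)" by (simp add: down_conc down_lists)
  finally have Dq: "down (LX P X) = conc (conc (lists GLX) (down E)) (lists GRX)" .
  have dE: "down E = (\<Union>(Y, r)\<in>exits P C. down (rl P r))"
    unfolding E_def EXL_def down_UN by (simp add: split_def)
  have "idl (fb n - 2) (down E)" unfolding dE
    by (rule idl_UN) (use piece in auto)
  then have "idl (1 + (fb n - 2) + 1) (down (LX P X))" unfolding Dq
    by (intro idl_conc idl_lists)
  moreover have "1 + (fb n - 2) + 1 = fb n" using fb_ge[of n] by simp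
  ultimately have D: "idl (fb n) (down (LX P X))" by simp
  have S: "idl (fb n) (down_strict (LX P X))"
  proof (cases "\<exists>U V. ctx P X U X V \<and> U @ V \<noteq> []")
    case True
    then obtain U V where c: "ctx P X U X V" "U @ V \<noteq> []" by blast
    have "down (LX P X) \<subseteq> down_strict (LX P X)"
    proof
      fix v assume "v \<in> down (LX P X)"
      then obtain w where w: "subseq v w" "derives P X w" unfolding down_def LX_def by blast
      have "derives P X (U @ w @ V)" using c(1) w(2) by (rule ctx_derives)
      moreover have "strict_subseq v (U @ w @ V)" unfolding strict_subseq_iff
      proof
        show "subseq v (U @ w @ V)" using subseq_drop_many[OF subseq_rev_drop_many[OF w(1)]] by simp
        have "length v \<le> length w" using list_emb_length[OF w(1)] .
        moreover have "0 < length U + length V" using c(2) by (cases U) auto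
        ultimately show "length v < length (U @ w @ V)" unfolding length_append by linarith
      qed
      ultimately show "v \<in> down_strict (LX P X)" unfolding down_strict_def LX_def by blast
    qed
    then have "down_strict (LX P X) = down (LX P X)" using ds_sub_down by blast
    then show ?thesis using D by simp
  next
    case False
    have "LX P X = E"
    proof (intro equalityI subsetI)
      fix w assume "w \<in> LX P X"
      then have "derives P X w" unfolding LX_def by blast
      then obtain u Y v r e where h: "ctx P X u Y v" "(Y, r) \<in> exits P C" "e \<in> rl P r" "w = u @ e @ v"
        using decompG[OF _ XC] by blast
      have "Y \<in> C" using h(2) unfolding exits_def by blast
      then obtain u' v' where "ctx P Y u' X v'" unfolding C_def sccG_def by blast
      then have "ctx P X (u @ u') X (v' @ v)" using h(1) ctx_trans by metis
      then have "u = [] \<and> v = []" using False by auto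
      then show "w \<in> E" unfolding E_def EXL_def using h by auto
    next
      fix w assume "w \<in> E"
      then obtain Y r where h: "(Y, r) \<in> exits P C" "w \<in> rl P r" unfolding E_def EXL_def by blast
      have Y: "Y \<in> C" "(Y, r) \<in> P" using h(1) unfolding exits_def by auto
      obtain u v where uv: "ctx P X u Y v" using Y(1) unfolding C_def sccG_def by blast
      obtain u' v' where "ctx P Y u' X v'" using Y(1) unfolding C_def sccG_def by blast
      then have "ctx P X (u @ u') X (v' @ v)" using uv ctx_trans by metis
      then have "u = [] \<and> v = []" using False by auto
      then have "ctx P X [] Y []" using uv by simp
      then have "derives P X ([] @ w @ [])" using rl_derives[OF Y(2) h(2)] by (rule ctx_derives)
      then show "w \<in> LX P X" unfolding LX_def by simp
    qed
    then have "down_strict (LX P X) = down_strict E" by simp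
    also have "\<dots> = (\<Union>(Y, r)\<in>exits P C. down_strict (rl P r))"
      unfolding E_def EXL_def ds_UN by (simp add: split_def)
    finally have "down_strict (LX P X) = (\<Union>(Y, r)\<in>exits P C. down_strict (rl P r))" .
    moreover have "idl (fb n - 2) (\<Union>(Y, r)\<in>exits P C. down_strict (rl P r))"
      by (rule idl_UN) (use piece in auto)
    ultimately show ?thesis using idl_mono[of "fb n - 2" _ "fb n"] by simp
  qed
  show ?case using D S by blast
qed


theorem theorem14:
  fixes M :: "('s, 'a::finite) nfa" and G :: "('n, 'a) cfg"
    and L :: "'a list set" and m N :: nat
  shows "(wf_nfa M \<and> L = nfa_lang M \<and> nfa_depth M = m \<longrightarrow>
            is_PT (2 * m + 2) (down L) \<and> is_PT (2 * m + 2) (down_strict L))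
       \<and> (wf_qnf G \<and> L = cfg_lang G \<and> card (nts G) = N \<longrightarrow>
            is_PT (4 * 3 ^ (N - 1) + 2) (down L) \<and> is_PT (4 * 3 ^ (N - 1) + 2) (down_strict L))"
proof (rule conjI; rule impI)
  assume "wf_nfa M \<and> L = nfa_lang M \<and> nfa_depth M = m"
  then show "is_PT (2 * m + 2) (down L) \<and> is_PT (2 * m + 2) (down_strict L)"
    using nfa_part[of M] by blast
next
  assume h: "wf_qnf G \<and> L = cfg_lang G \<and> card (nts G) = N"
  then have wf: "finite (nts G)" "\<forall>(X, r)\<in>prods G. X \<in> nts G \<and> rhs_nts r \<subseteq> nts G"
    and st: "start G \<in> nts G" unfolding wf_qnf_def by auto
  have L: "L = LX (prods G) (start G)" using h unfolding cfg_lang_def LX_def by blast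
  define n where "n = card (reach (prods G) (start G))"
  have i: "idl (fb n) (down L)" "idl (fb n) (down_strict L)"
    using cfg_main[OF wf st n_def[symmetric]] L by blast+
  have "reach (prods G) (start G) \<subseteq> nts G" using reach_sub[OF wf(2) st] .
  then have "n \<le> N" unfolding n_def using h wf(1) card_mono by blast
  then have le: "fb n \<le> fb N" by (rule fb_mono)
  have "is_PT (fb N + 1) (down L)" by (rule idl_PT[OF idl_mono[OF i(1) le]])
  moreover have "is_PT (fb N + 1) (down_strict L)" by (rule idl_PT[OF idl_mono[OF i(2) le]])
  moreover have "fb N + 1 = 4 * 3 ^ (N - 1) + 2" unfolding fb_def by simp
  ultimately show "is_PT (4 * 3 ^ (N - 1) + 2) (down L) \<and> is_PT (4 * 3 ^ (N - 1) + 2) (down_strict L)"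
    by simp
qed

end
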